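(* Let $N=[n(i,j)]_{1\le i,j\le r}$ be a generalised Cartan matrix, $\mathfrak h$, $\alpha_1,\dots,\alpha_r$, $\mathcal A$, $F:\mathfrak h\to\mathrm{Der}(\mathcal A)$ and invertible $v_1,\dots,v_r\in\mathcal A$ with $F(H)(v_i)=\alpha_i(H)v_i$ for all $H\in\mathfrak h$ be as in the context. Suppose there exist $\delta_1,\dots,\delta_r,\delta_{-1},\dots,\delta_{-r}\in\mathrm{Im}\,F$ such that, with $\mathbf X_i=v_i\delta_i$ and $\mathbf X_{-i}=v_i^{-1}\delta_{-i}$, one has in $\mathrm{Der}(\mathcal A)$ $$[\mathbf X_i,\mathbf X_{-i}]=F(H_i)\quad(1\le i\le r),\qquad [\mathbf X_i,\mathbf X_{-j}]=0\quad(i\neq j).$$ Set $A_{ij}=\alpha_i(\delta_j)$ for $1\le i,j\le r$. Then: (i) $A_{ii}\neq 0$ for $1\le i\le r$; (ii) $\delta_{-i}=\frac{1}{A_{ii}}\bigl(-F(H_i)+\frac{1}{A_{ii}}\delta_i\bigr)$ for $1\le i\le r$; (iii) $\frac{A_{ij}}{A_{jj}}\in\{0,-1\}$ for $i\neq j$; (iv) $\frac{A_{ij}}{A_{jj}}+\frac{A_{ji}}{A_{ii}}=n(j,i)$ for all $i,j$; (v) the matrix $A'=[\frac{A_{ij}}{A_{jj}}]$ has the property that if its $(i,j)$ entry equals $-1$, then the $i$-th row and the $j$-th column of $A'$ contain no other entry equal to $-1$; (vi) if $\frac{A_{ij}}{A_{jj}}=\frac{A_{ji}}{A_{ii}}=-1$,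 then $N$ contains $\begin{pmatrix}2&-2\\-2&2\end{pmatrix}$ as a direct factor, i.e. $n(i,j)=n(j,i)=-2$ and $n(i,k)=n(k,i)=n(j,k)=n(k,j)=0$ for all $k\notin\{i,j\}$, and moreover $F(H_i)+F(H_j)=0$.
   Context: A generalised Cartan matrix is $N=[n(i,j)]_{1\le i,j\le r}$ with $n(i,j)\in\mathbb Z$, $n(i,i)=2$, $n(i,j)\le 0$ for $i\neq j$, and $n(i,j)=0\iff n(j,i)=0$. Let $s$ be the corank of $N$, let $\mathfrak h$ be the (abelian) complex Lie algebra with basis $H_1,\dots,H_{r+s}$, and let $\alpha_1,\dots,\alpha_r\in\mathfrak h^*$ be linearly independent with $\alpha_j(H_i)=n(i,j)$ for $1\le i,j\le r$; put $Z=\bigcap_{i}\ker\alpha_i$. $\mathcal A$ is a complex commutative algebra, $\mathrm{Der}(\mathcal A)$ its Lie algebra of derivations (commutator bracket); for $a\in\mathcal A$, $D\in\mathrm{Der}(\mathcal A)$, $aD$ denotes the derivation $b\mapsto aD(b)$. $F:\mathfrak h\to\mathrm{Der}(\mathcal A)$ is a Lie algebra homomorphism and $v_1,\dots,v_r\in\mathcal A$ are invertible with $F(H)(v_i)=\alpha_i(H)v_i$. Then $\ker F\subseteq Z$, so each $\alpha_i$ induces a well-defined linear form on $\mathrm{Im}\,F$, still denoted $\alpha_i$, via $\alpha_i(F(H))=\alpha_i(H)$. *)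

theory Defs
  imports Complex_Main
begin

definition gcm :: "nat \<Rightarrow> (nat \<Rightarrow> nat \<Rightarrow> int) \<Rightarrow> bool" where
  "gcm r N \<longleftrightarrow> (\<forall>i\<in>{1..r}. N i i = 2) \<and>
     (\<forall>i\<in>{1..r}. \<forall>j\<in>{1..r}. i \<noteq> j \<longrightarrow> N i j \<le> 0) \<and>
     (\<forall>i\<in>{1..r}. \<forall>j\<in>{1..r}. N i j = 0 \<longleftrightarrow> N j i = 0)"

definition lin_indep_on :: "nat set \<Rightarrow> nat set \<Rightarrow> (nat \<Rightarrow> nat \<Rightarrow> complex) \<Rightarrow> bool" where
  "lin_indep_on I K v \<longleftrightarrow>
     (\<forall>c. (\<forall>k\<in>K. (\<Sum>i\<in>I. c i * v i k) = 0) \<longrightarrow> (\<forall>i\<in>I. c i = 0))"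

definition mat_rank :: "nat \<Rightarrow> (nat \<Rightarrow> nat \<Rightarrow> int) \<Rightarrow> nat" where
  "mat_rank r N = Max {card J | J. J \<subseteq> {1..r} \<and>
      lin_indep_on J {1..r} (\<lambda>j k. of_int (N k j))}"

definition corank :: "nat \<Rightarrow> (nat \<Rightarrow> nat \<Rightarrow> int) \<Rightarrow> nat" where
  "corank r N = r - mat_rank r N"

text \<open>A commutative unital complex algebra is modelled by a comm_ring_1 type together
  with a unital ring homomorphism from the complex numbers (scalar c acts by multiplication
  with iota c).\<close>
definition cplx_alg_hom :: "(complex \<Rightarrow> 'a::comm_ring_1) \<Rightarrow> bool" where
  "cplx_alg_hom \<iota> \<longleftrightarrow> \<iota> 1 = 1 \<and> (\<forall>x y. \<iota> (x + y) = \<iota> x + \<iota> y) \<and>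
     (\<forall>x y. \<iota> (x * y) = \<iota> x * \<iota> y)"

definition is_der :: "(complex \<Rightarrow> 'a::comm_ring_1) \<Rightarrow> ('a \<Rightarrow> 'a) \<Rightarrow> bool" where
  "is_der \<iota> D \<longleftrightarrow> (\<forall>a b. D (a + b) = D a + D b) \<and>
     (\<forall>c a. D (\<iota> c * a) = \<iota> c * D a) \<and>
     (\<forall>a b. D (a * b) = a * D b + b * D a)"

definition der_br :: "('a::comm_ring_1 \<Rightarrow> 'a) \<Rightarrow> ('a \<Rightarrow> 'a) \<Rightarrow> ('a \<Rightarrow> 'a)" where
  "der_br D E = (\<lambda>b. D (E b) - E (D b))"

text \<open>The Cartan subalgebra h has basis H_1..H_m (m = r+s); an element of h is given by
  its coordinate vector h (only coordinates 1..m matter). F is the linear map determined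
  by the values FH k = F(H_k).\<close>
definition Fof :: "(complex \<Rightarrow> 'a::comm_ring_1) \<Rightarrow> nat \<Rightarrow> (nat \<Rightarrow> 'a \<Rightarrow> 'a)
    \<Rightarrow> (nat \<Rightarrow> complex) \<Rightarrow> ('a \<Rightarrow> 'a)" where
  "Fof \<iota> m FH h = (\<lambda>b. \<Sum>k\<in>{1..m}. \<iota> (h k) * FH k b)"

definition ImF :: "(complex \<Rightarrow> 'a::comm_ring_1) \<Rightarrow> nat \<Rightarrow> (nat \<Rightarrow> 'a \<Rightarrow> 'a) \<Rightarrow> ('a \<Rightarrow> 'a) set" where
  "ImF \<iota> m FH = range (Fof \<iota> m FH)"

text \<open>A linear form on h given by its values a k = alpha(H_k), evaluated at h.\<close>
definition lform :: "nat \<Rightarrow> (nat \<Rightarrow> complex) \<Rightarrow> (nat \<Rightarrow> complex) \<Rightarrow> complex" where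
  "lform m a h = (\<Sum>k\<in>{1..m}. a k * h k)"

text \<open>Induced form on Im F: alpha(F(H)) = alpha(H) (well defined since ker F is in Z).\<close>
definition lform_Im :: "(complex \<Rightarrow> 'a::comm_ring_1) \<Rightarrow> nat \<Rightarrow> (nat \<Rightarrow> 'a \<Rightarrow> 'a)
    \<Rightarrow> (nat \<Rightarrow> complex) \<Rightarrow> ('a \<Rightarrow> 'a) \<Rightarrow> complex" where
  "lform_Im \<iota> m FH a \<delta> = lform m a (SOME h. Fof \<iota> m FH h = \<delta>)"

end

theory Submission
  imports Defs
begin

lemma cm1: "(-1 - (a::complex) = 0) = (a = -1)" by (metis diff_0 diff_eq_diff_eq diff_self)
lemma cm2: "(-2 - (a::complex) = 0) = (a = -2)" by (metis diff_0 diff_eq_diff_eq diff_self)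
lemma cp2: "((a::complex) + 2 = 0) = (a = -2)" by (simp add: eq_neg_iff_add_eq_0)
lemma cp1: "((a::complex) + 1 = 0) = (a = -1)" by (simp add: eq_neg_iff_add_eq_0)
lemma oim2: "(of_int q = (-2::complex)) = (q = -2)" using of_int_eq_iff[of q "-2", where 'a=complex] by simp
lemma oim1: "(of_int q = (-1::complex)) = (q = -1)" using of_int_eq_iff[of q "-1", where 'a=complex] by simp
lemma oi2: "(of_int q = (2::complex)) = (q = 2)" using of_int_eq_iff[of q "2", where 'a=complex] by simp

lemma pair_class:
  fixes x y :: complex and p q :: int
  assumes "p \<le> 0" "q \<le> 0" "p = 0 \<longleftrightarrow> q = 0"
    and h1: "y * (x - of_int p) + (x - of_int p) * 1 = 0"
    and h2: "y * (1 - of_int 2) + (x - of_int p) * y = 0"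
    and h3: "x * (y - of_int q) + (y - of_int q) * 1 = 0"
    and h4: "x * (1 - of_int 2) + (y - of_int q) * x = 0"
  shows "(x = 0 \<and> y = 0 \<and> p = 0 \<and> q = 0) \<or> (x = -1 \<and> y = 0 \<and> p = -1 \<and> q = -1)
       \<or> (x = 0 \<and> y = -1 \<and> p = -1 \<and> q = -1) \<or> (x = -1 \<and> y = -1 \<and> p = -2 \<and> q = -2)"
proof -
  have e1: "(x - of_int p) * (y + 1) = 0" using h1 by (simp add: algebra_simps)
  have e2: "y * (x - of_int p - 1) = 0" using h2 by (simp add: algebra_simps)
  have e3: "(y - of_int q) * (x + 1) = 0" using h3 by (simp add: algebra_simps)
  have e4: "x * (y - of_int q - 1) = 0" using h4 by (simp add: algebra_simps)
  show ?thesis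
  proof (cases "y = -1")
    case True
    then have x: "x = of_int p + 1" using e2 by (simp add: algebra_simps)
    have "(-1 - of_int q) * (of_int p + 2) = (0::complex)" using e3 True x
      by (simp add: algebra_simps)
    then have "-1 - of_int q = (0::complex) \<or> of_int p + 2 = (0::complex)"
      by (simp only: mult_eq_0_iff)
    then have "q = -1 \<or> p = -2" by (simp only: cm1 cp2 oim1 oim2)
    then show ?thesis
    proof
      assume q: "q = -1"
      then have "x = 0" using e4 True by simp
      then have "of_int p + 1 = (0::complex)" using x by simp
      then have "p = -1" by (simp only: cp1 oim1)
      then show ?thesis using q True \<open>x = 0\<close> by simp
    next
      assume p: "p = -2"
      then have xm: "x = -1" using x by simp
      then have "of_int q + 2 = (0::complex)" using e4 True by (simp add: algebra_simps)
      then have "q = -2" by (simp only: cp2 oim2)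
      then show ?thesis using p xm True by simp
    qed
  next
    case False
    then have x: "x = of_int p" using e1 by (simp add: cp1)
    then have y: "y = 0" using e2 by simp
    have a: "of_int q * (x + 1) = 0" using e3 y by simp
    have b: "x * (of_int q + 1) = 0"
    proof -
      have "x * (of_int q + 1) = - (x * (y - of_int q - 1))" using y by (simp add: algebra_simps)
      then show ?thesis using e4 by simp
    qed
    show ?thesis
    proof (cases "q = 0")
      case True
      then show ?thesis using assms(3) x y by simp
    next
      case False
      then have "x + 1 = 0" using a by simp
      then have xm: "x = -1" by (simp only: cp1)
      then have "x \<noteq> 0" by simp
      then have "of_int q + 1 = (0::complex)" using b mult_eq_0_iff[of x "of_int q + 1"] by blast
      then have "q = -1" by (simp only: cp1 oim1)
      moreover have "of_int p = (-1::complex)" using x xm by simp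
      then have "p = -1" by (simp only: oim1)
      ultimately show ?thesis using xm y by simp
    qed
  qed
qed

lemma gcm_facts:
  assumes "gcm r N" "i \<in> {1..r}" "j \<in> {1..r}"
  shows "N i i = 2" "i \<noteq> j \<Longrightarrow> N i j \<le> 0" "N i j = 0 \<longleftrightarrow> N j i = 0"
  using assms unfolding gcm_def by auto

lemma cls:
  fixes N :: "nat \<Rightarrow> nat \<Rightarrow> int" and P :: "nat \<Rightarrow> nat \<Rightarrow> complex"
  assumes gcm: "gcm r N" and Pd0: "\<forall>i\<in>{1..r}. P i i = 1"
  and S0: "\<forall>i\<in>{1..r}. \<forall>j\<in>{1..r}. \<forall>k\<in>{1..r}. i\<noteq>j \<longrightarrow>
      P j i * (P k j - of_int (N j k)) + (P i j - of_int (N j i)) * P k i = 0"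
  and ij: "i\<in>{1..r}" "j\<in>{1..r}" "i \<noteq> j"
  shows "(P i j = 0 \<and> P j i = 0 \<and> N j i = 0 \<and> N i j = 0) \<or> (P i j = -1 \<and> P j i = 0 \<and> N j i = -1 \<and> N i j = -1)
       \<or> (P i j = 0 \<and> P j i = -1 \<and> N j i = -1 \<and> N i j = -1) \<or> (P i j = -1 \<and> P j i = -1 \<and> N j i = -2 \<and> N i j = -2)"
proof -
  have Pd: "\<And>i. i\<in>{1..r} \<Longrightarrow> P i i = 1" using Pd0 by blast
  have S: "\<And>i j k. i\<in>{1..r} \<Longrightarrow> j\<in>{1..r} \<Longrightarrow> k\<in>{1..r} \<Longrightarrow> i\<noteq>j \<Longrightarrow>
      P j i * (P k j - of_int (N j k)) + (P i j - of_int (N j i)) * P k i = 0" using S0 by blast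
  show ?thesis
proof (rule pair_class)
  show "N j i \<le> 0" "N i j \<le> 0" "N j i = 0 \<longleftrightarrow> N i j = 0" using gcm_facts[OF gcm] ij by auto
  have Nii: "N i i = 2" "N j j = 2" using gcm_facts[OF gcm] ij by auto
  show "P j i * (P i j - of_int (N j i)) + (P i j - of_int (N j i)) * 1 = 0"
    using S[of i j i] ij Pd[of i] by simp
  show "P j i * (1 - of_int 2) + (P i j - of_int (N j i)) * P j i = 0"
    using S[of i j j] ij Pd[of j] Nii by simp
  show "P i j * (P j i - of_int (N i j)) + (P j i - of_int (N i j)) * 1 = 0"
    using S[of j i j] ij Pd[of j] by simp
  show "P i j * (1 - of_int 2) + (P j i - of_int (N i j)) * P i j = 0"
    using S[of j i i] ij Pd[of i] Nii by simp
qed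
qed

lemma dbl:
  fixes N :: "nat \<Rightarrow> nat \<Rightarrow> int" and P :: "nat \<Rightarrow> nat \<Rightarrow> complex"
  assumes gcm: "gcm r N" and Pd0: "\<forall>i\<in>{1..r}. P i i = 1"
  and S0: "\<forall>i\<in>{1..r}. \<forall>j\<in>{1..r}. \<forall>k\<in>{1..r}. i\<noteq>j \<longrightarrow>
      P j i * (P k j - of_int (N j k)) + (P i j - of_int (N j i)) * P k i = 0"
  and ij: "i\<in>{1..r}" "j\<in>{1..r}" "i \<noteq> j" and k: "k\<in>{1..r}" "k \<noteq> i" "k \<noteq> j"
  and m1: "P i j = -1" "P j i = -1"
  shows "N i k = 0 \<and> N k i = 0 \<and> N j k = 0 \<and> N k j = 0"
proof -
  have S: "\<And>i j k. i\<in>{1..r} \<Longrightarrow> j\<in>{1..r} \<Longrightarrow> k\<in>{1..r} \<Longrightarrow> i\<noteq>j \<Longrightarrow>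
      P j i * (P k j - of_int (N j k)) + (P i j - of_int (N j i)) * P k i = 0" using S0 by blast
  have N2: "N j i = -2" "N i j = -2" using cls[OF gcm Pd0 S0 ij] m1 by auto
  have e1: "P j i * (P k j - of_int (N j k)) + (P i j - of_int (N j i)) * P k i = 0"
    using S[of i j k] ij k by simp
  have e2: "P i j * (P k i - of_int (N i k)) + (P j i - of_int (N i j)) * P k j = 0"
    using S[of j i k] ij k by simp
  have "(of_int (N j k + N i k) :: complex) =
     (P j i * (P k j - of_int (N j k)) + (P i j - of_int (N j i)) * P k i)
     + (P i j * (P k i - of_int (N i k)) + (P j i - of_int (N i j)) * P k j)"
    using m1 N2 by (simp add: algebra_simps)
  also have "\<dots> = 0" using e1 e2 by simp
  finally have "N j k + N i k = 0" by (simp only: of_int_eq_0_iff)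
  moreover have "N j k \<le> 0" "N i k \<le> 0" using gcm_facts[OF gcm] ij k by auto
  ultimately have "N j k = 0" "N i k = 0" by auto
  then show ?thesis using gcm_facts[OF gcm] ij k by blast
qed

lemma scalar_main:
  fixes N :: "nat \<Rightarrow> nat \<Rightarrow> int" and P :: "nat \<Rightarrow> nat \<Rightarrow> complex"
  assumes gcm: "gcm r N" and Pd0: "\<forall>i\<in>{1..r}. P i i = 1"
  and S0: "\<forall>i\<in>{1..r}. \<forall>j\<in>{1..r}. \<forall>k\<in>{1..r}. i\<noteq>j \<longrightarrow>
      P j i * (P k j - of_int (N j k)) + (P i j - of_int (N j i)) * P k i = 0"
  shows "(\<forall>i\<in>{1..r}. \<forall>j\<in>{1..r}. i \<noteq> j \<longrightarrow> P i j \<in> {0, -1})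
    \<and> (\<forall>i\<in>{1..r}. \<forall>j\<in>{1..r}. P i j + P j i = of_int (N j i))
    \<and> (\<forall>i\<in>{1..r}. \<forall>j\<in>{1..r}. P i j = -1 \<longrightarrow>
          (\<forall>k\<in>{1..r}. k \<noteq> j \<longrightarrow> P i k \<noteq> -1) \<and> (\<forall>k\<in>{1..r}. k \<noteq> i \<longrightarrow> P k j \<noteq> -1))
    \<and> (\<forall>i\<in>{1..r}. \<forall>j\<in>{1..r}. P i j = -1 \<and> P j i = -1 \<longrightarrow>
          N i j = -2 \<and> N j i = -2 \<and>
          (\<forall>k\<in>{1..r} - {i, j}. N i k = 0 \<and> N k i = 0 \<and> N j k = 0 \<and> N k j = 0))"
proof -
  note C = cls[OF gcm Pd0 S0]
  note D = dbl[OF gcm Pd0 S0]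
  have Pd: "\<And>i. i\<in>{1..r} \<Longrightarrow> P i i = 1" using Pd0 by blast
  have S: "\<And>i j k. i\<in>{1..r} \<Longrightarrow> j\<in>{1..r} \<Longrightarrow> k\<in>{1..r} \<Longrightarrow> i\<noteq>j \<Longrightarrow>
      P j i * (P k j - of_int (N j k)) + (P i j - of_int (N j i)) * P k i = 0" using S0 by blast
  note G = gcm_facts[OF gcm]
  have c1: "\<forall>i\<in>{1..r}. \<forall>j\<in>{1..r}. i \<noteq> j \<longrightarrow> P i j \<in> {0, -1}"
  proof (intro ballI impI)
    fix i j assume i: "i \<in> {1..r}" and j: "j \<in> {1..r}" and "i \<noteq> j"
    then show "P i j \<in> {0, -1}" using C[OF i j] by auto
  qed
  have c2: "\<forall>i\<in>{1..r}. \<forall>j\<in>{1..r}. P i j + P j i = of_int (N j i)"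
  proof (intro ballI)
    fix i j assume i: "i \<in> {1..r}" and j: "j \<in> {1..r}"
    show "P i j + P j i = of_int (N j i)"
    proof (cases "i = j")
      case True
      then show ?thesis using Pd[OF i] G(1)[OF i i] by simp
    next
      case False
      then show ?thesis using C[OF i j False] by auto
    qed
  qed
  have c4: "\<forall>i\<in>{1..r}. \<forall>j\<in>{1..r}. P i j = -1 \<and> P j i = -1 \<longrightarrow>
          N i j = -2 \<and> N j i = -2 \<and>
          (\<forall>k\<in>{1..r} - {i, j}. N i k = 0 \<and> N k i = 0 \<and> N j k = 0 \<and> N k j = 0)"
  proof (intro ballI impI conjI)
    fix i j assume i: "i \<in> {1..r}" and j: "j \<in> {1..r}" and mm: "P i j = -1 \<and> P j i = -1"
    then have m: "P i j = -1" "P j i = -1" by auto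
    then have ij: "i \<noteq> j" using Pd[OF i] by auto
    show "N i j = -2" "N j i = -2" using C[OF i j ij] m by auto
    fix k assume "k \<in> {1..r} - {i, j}"
    then have k: "k \<in> {1..r}" "k \<noteq> i" "k \<noteq> j" by auto
    show "N i k = 0" "N k i = 0" "N j k = 0" "N k j = 0" using D[OF i j ij k m] by auto
  qed
  have c3: "\<forall>i\<in>{1..r}. \<forall>j\<in>{1..r}. P i j = -1 \<longrightarrow>
          (\<forall>k\<in>{1..r}. k \<noteq> j \<longrightarrow> P i k \<noteq> -1) \<and> (\<forall>k\<in>{1..r}. k \<noteq> i \<longrightarrow> P k j \<noteq> -1)"
  proof (intro ballI impI)
  fix i j assume i: "i \<in> {1..r}" and j: "j \<in> {1..r}"
  assume m: "P i j = -1"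
  then have ij: "i \<noteq> j" using Pd[OF i] by auto
  have Pji: "P j i = 0 \<or> P j i = -1" using C[OF i j ij] m by auto
  have r1: "\<forall>k\<in>{1..r}. k \<noteq> j \<longrightarrow> P i k \<noteq> -1"
  proof (intro ballI impI notI)
    fix k assume k: "k \<in> {1..r}" "k \<noteq> j" and mk: "P i k = -1"
    then have ik: "i \<noteq> k" using Pd[OF i] by auto
    show False
    proof (cases "P j i = -1")
      case True
      then have "N i k = 0" using D[OF i j ij k(1) ik[symmetric] k(2) m] by auto
      then show False using C[OF i k(1) ik] mk by auto
    next
      case F1: False
      show False
      proof (cases "P k i = -1")
        case True
        then have "N i j = 0" using D[OF i k(1) ik j ij[symmetric] k(2)[symmetric] mk] by auto
        then show False using C[OF i j ij] m by auto
      next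
        case False
        then have z: "P j i = 0" "P k i = 0" "N i j = -1" "N k i = -1" "N i k = -1"
          using C[OF i j ij] C[OF i k(1) ik] m mk F1 by auto
        have "P i k * (P j i - of_int (N i j)) + (P k i - of_int (N i k)) * P j k = 0"
          using S[of k i j] k i j ik by auto
        then have "P j k = 1" using z mk by simp
        then show False using C[OF j k(1) k(2)[symmetric]] by auto
      qed
    qed
  qed
  have r2: "\<forall>k\<in>{1..r}. k \<noteq> i \<longrightarrow> P k j \<noteq> -1"
  proof (intro ballI impI notI)
    fix k assume k: "k \<in> {1..r}" "k \<noteq> i" and mk: "P k j = -1"
    then have kj: "k \<noteq> j" using Pd[OF j] by auto
    show False
    proof (cases "P j i = -1")
      case True
      then have "N j k = 0" using D[OF i j ij k(1) k(2) kj m] by auto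
      then show False using C[OF k(1) j kj] mk by auto
    next
      case F1: False
      show False
      proof (cases "P j k = -1")
        case True
        then have "N j i = 0" using D[OF k(1) j kj i k(2)[symmetric] ij mk] by auto
        then show False using C[OF i j ij] m by auto
      next
        case False
        then have z: "P j i = 0" "P j k = 0" "N i j = -1" "N k j = -1"
          using C[OF i j ij] C[OF k(1) j kj] m mk F1 by auto
        have e1: "P i j * (P i i - of_int (N i i)) + (P j i - of_int (N i j)) * P i j = 0"
          using S[of j i i] i j ij by auto
        have e2: "P i j * (P k i - of_int (N i k)) + (P j i - of_int (N i j)) * P k j = 0"
          using S[of j i k] i j k ij by auto
        have e3: "P k j * (P i k - of_int (N k i)) + (P j k - of_int (N k j)) * P i j = 0"
          using S[of j k i] i j k kj by auto
        have e4: "P k j * (P k k - of_int (N k k)) + (P j k - of_int (N k j)) * P k j = 0"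
          using S[of j k k] j k kj by auto
        have a: "P i k = of_int (N k i) - 1" using e3 z m mk by (simp add: algebra_simps)
        have b: "P k i = of_int (N i k) - 1" using e2 z m mk by (simp add: algebra_simps)
        have c: "P i k + P k i = of_int (N k i)" "N i k = N k i" using C[OF i k(1) k(2)[symmetric]] by auto
        have s2: "P i k + P k i = 2 * of_int (N k i) - 2" using a b c(2) by simp
        have "(of_int (N k i)::complex) - 2 = (2 * of_int (N k i) - 2) - of_int (N k i)"
          by (simp add: algebra_simps)
        also have "\<dots> = 0" using s2 c(1) by simp
        finally have "of_int (N k i) = (2::complex)" by simp
        then have "N k i = 2" by (simp only: oi2)
        moreover have "N k i \<le> 0" using G(2)[OF k(1) i k(2)] .
        ultimately show False by simp
      qed
    qed
  qed
  show "(\<forall>k\<in>{1..r}. k \<noteq> j \<longrightarrow> P i k \<noteq> -1) \<and> (\<forall>k\<in>{1..r}. k \<noteq> i \<longrightarrow> P k j \<noteq> -1)" using r1 r2 by blast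
  qed
  show ?thesis using c1 c2 c3 c4 by blast
qed

lemma iota_hom:
  assumes "cplx_alg_hom \<iota>"
  shows "\<iota> 1 = 1" "\<iota> (x + y) = \<iota> x + \<iota> y" "\<iota> (x * y) = \<iota> x * \<iota> y"
  using assms unfolding cplx_alg_hom_def by auto

lemma iota_zero:
  assumes "cplx_alg_hom \<iota>" shows "\<iota> 0 = 0"
  using iota_hom(2)[OF assms, of 0 0] by simp

lemma iota_neg:
  assumes "cplx_alg_hom \<iota>" shows "\<iota> (- x) = - \<iota> x"
proof -
  have "\<iota> (- x) + \<iota> x = 0" using iota_hom(2)[OF assms, of "-x" x] iota_zero[OF assms] by simp
  then show ?thesis by (simp add: add_eq_0_iff2)
qed

lemma iota_diff:
  assumes "cplx_alg_hom \<iota>" shows "\<iota> (x - y) = \<iota> x - \<iota> y"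
  using iota_hom(2)[OF assms, of x "-y"] iota_neg[OF assms, of y] by simp

lemmas iota_basic = iota_hom iota_zero iota_neg iota_diff

lemma iota_inj:
  assumes "cplx_alg_hom \<iota>" and "\<iota> x = \<iota> y"
  shows "x = y"
proof (rule ccontr)
  assume "x \<noteq> y"
  have "\<iota> (x - y) = 0" using iota_basic[OF assms(1)] assms(2) by simp
  then have "\<iota> ((x - y) * (1 / (x - y))) = 0" using iota_hom(3)[OF assms(1), of "x - y" "1 / (x - y)"] by simp
  moreover have "(x - y) * (1 / (x - y)) = 1" using \<open>x \<noteq> y\<close> by simp
  ultimately have "\<iota> 1 = (0::'a)" by simp
  then show False using iota_basic(1)[OF assms(1)] by simp
qed

lemma iota_sum:
  assumes "cplx_alg_hom \<iota>"
  shows "\<iota> (sum f S) = (\<Sum>k\<in>S. \<iota> (f k))"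
proof (induction S rule: infinite_finite_induct)
  case (infinite A) then show ?case using iota_basic(4)[OF assms] by simp
next
  case empty then show ?case using iota_basic(4)[OF assms] by simp
next
  case (insert x F) then show ?case using iota_basic(2)[OF assms] by simp
qed

lemma der_basic:
  assumes "is_der \<iota> D"
  shows "D (a + b) = D a + D b" "D (\<iota> c * a) = \<iota> c * D a" "D (a * b) = a * D b + b * D a"
    "D 0 = 0" "D 1 = 0"
proof -
  show a: "D (a + b) = D a + D b" and "D (\<iota> c * a) = \<iota> c * D a" and m: "D (a * b) = a * D b + b * D a"
    using assms unfolding is_der_def by auto
  have a': "\<And>a b. D (a + b) = D a + D b" using assms unfolding is_der_def by auto
  have m': "\<And>a b. D (a * b) = a * D b + b * D a" using assms unfolding is_der_def by auto
  show "D 0 = 0" using a'[of 0 0] by simp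
  show "D 1 = 0" using m'[of 1 1] by simp
qed

lemma der_sum:
  assumes "is_der \<iota> D"
  shows "D (sum f S) = (\<Sum>k\<in>S. D (f k))"
proof (induction S rule: infinite_finite_induct)
  case (infinite A) then show ?case using der_basic(4)[OF assms] by simp
next
  case empty then show ?case using der_basic(4)[OF assms] by simp
next
  case (insert x F) then show ?case using der_basic(1)[OF assms] by simp
qed

lemma Fof_der:
  assumes "cplx_alg_hom \<iota>" and F_der: "\<forall>k\<in>{1..m}. is_der \<iota> (FH k)"
  shows "is_der \<iota> (Fof \<iota> m FH h)"
  unfolding is_der_def Fof_def
proof (intro conjI allI)
  fix a b
  show "(\<Sum>k = 1..m. \<iota> (h k) * FH k (a + b)) = (\<Sum>k = 1..m. \<iota> (h k) * FH k a) + (\<Sum>k = 1..m. \<iota> (h k) * FH k b)"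
    unfolding sum.distrib[symmetric]
    by (rule sum.cong[OF refl]) (simp add: distrib_left der_basic(1)[OF bspec[OF F_der]])
  show "(\<Sum>k = 1..m. \<iota> (h k) * FH k (a * b)) = a * (\<Sum>k = 1..m. \<iota> (h k) * FH k b) + b * (\<Sum>k = 1..m. \<iota> (h k) * FH k a)"
    unfolding sum_distrib_left sum.distrib[symmetric]
    by (rule sum.cong[OF refl]) (simp add: algebra_simps der_basic(3)[OF bspec[OF F_der]])
next
  fix c a
  show "(\<Sum>k = 1..m. \<iota> (h k) * FH k (\<iota> c * a)) = \<iota> c * (\<Sum>k = 1..m. \<iota> (h k) * FH k a)"
    unfolding sum_distrib_left
    by (rule sum.cong[OF refl]) (subst der_basic(2)[OF bspec[OF F_der]], simp, simp add: mult_ac)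
qed

lemma Fof_comm:
  assumes "cplx_alg_hom \<iota>" and F_der: "\<forall>k\<in>{1..m}. is_der \<iota> (FH k)"
    and F_comm: "\<forall>k\<in>{1..m}. \<forall>l\<in>{1..m}. der_br (FH k) (FH l) = (\<lambda>b. 0)"
  shows "Fof \<iota> m FH h (Fof \<iota> m FH h' b) = Fof \<iota> m FH h' (Fof \<iota> m FH h b)"
proof -
  have c: "FH k (FH l b) = FH l (FH k b)" if "k \<in> {1..m}" "l \<in> {1..m}" for k l
    using F_comm that unfolding der_br_def by (metis eq_iff_diff_eq_0)
  have e: "Fof \<iota> m FH h (Fof \<iota> m FH h' b) = (\<Sum>k = 1..m. \<Sum>l = 1..m. \<iota> (h k) * (\<iota> (h' l) * FH k (FH l b)))"
    if "\<forall>k\<in>{1..m}. is_der \<iota> (FH k)" for h h'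
    unfolding Fof_def
    by (rule sum.cong[OF refl]) (simp add: der_sum[OF bspec[OF that]] der_basic(2)[OF bspec[OF that]] sum_distrib_left)
  show ?thesis
    unfolding e[OF F_der, of h h'] e[OF F_der, of h' h]
    apply (subst sum.swap)
    apply (rule sum.cong, simp)+
    using c by (simp add: algebra_simps)
qed

lemma ImF_der:
  assumes "cplx_alg_hom \<iota>" and F_der: "\<forall>k\<in>{1..m}. is_der \<iota> (FH k)" and "D \<in> ImF \<iota> m FH"
  shows "is_der \<iota> D"
  using assms Fof_der unfolding ImF_def by auto

lemma ImF_comm:
  assumes "cplx_alg_hom \<iota>" and F_der: "\<forall>k\<in>{1..m}. is_der \<iota> (FH k)"
    and F_comm: "\<forall>k\<in>{1..m}. \<forall>l\<in>{1..m}. der_br (FH k) (FH l) = (\<lambda>b. 0)"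
    and "D \<in> ImF \<iota> m FH" "E \<in> ImF \<iota> m FH"
  shows "D (E b) = E (D b)"
  using assms Fof_comm[OF assms(1-3)] unfolding ImF_def by auto

lemma ImF_eig:
  assumes "cplx_alg_hom \<iota>" and F_der: "\<forall>k\<in>{1..m}. is_der \<iota> (FH k)"
    and eig: "\<forall>k\<in>{1..m}. FH k u = \<iota> (a k) * u"
    and D: "D \<in> ImF \<iota> m FH"
  shows "D u = \<iota> (lform_Im \<iota> m FH a D) * u"
proof -
  define h0 where "h0 = (SOME h. Fof \<iota> m FH h = D)"
  have "\<exists>h. Fof \<iota> m FH h = D" using D unfolding ImF_def by auto
  then have h0: "Fof \<iota> m FH h0 = D" unfolding h0_def by (rule someI_ex)
  have "D u = (\<Sum>k = 1..m. \<iota> (h0 k) * (\<iota> (a k) * u))"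
    using eig unfolding h0[symmetric] Fof_def by simp
  also have "\<dots> = (\<Sum>k = 1..m. \<iota> (a k * h0 k)) * u"
    unfolding sum_distrib_right
    by (rule sum.cong[OF refl]) (simp add: iota_basic(3)[OF assms(1)] mult_ac)
  also have "\<dots> = \<iota> (lform m a h0) * u"
    unfolding lform_def iota_sum[OF assms(1)] ..
  finally show ?thesis unfolding lform_Im_def h0_def by simp
qed

lemma bracket:
  fixes vi vj wj c1 c2 :: "'a::comm_ring_1"
  assumes D: "is_der \<iota> D" and E: "is_der \<iota> E" and DE: "\<And>b. D (E b) = E (D b)"
    and inv: "vj * wj = 1" and Dv: "D vj = c1 * vj" and Ev: "E vi = c2 * vi"
  shows "der_br (\<lambda>b. vi * D b) (\<lambda>b. wj * E b) b = vi * wj * (- (c1 * E b) - c2 * D b)"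
proof -
  have "vj * D wj + wj * D vj = 0" using der_basic(3)[OF D, of vj wj] der_basic(5)[OF D] inv by simp
  then have "wj * (vj * D wj + wj * D vj) = 0" by simp
  then have Dw: "D wj = - (c1 * wj)" using Dv inv
    by (simp add: algebra_simps eq_neg_iff_add_eq_0 mult.assoc[symmetric])
  have 1: "D (wj * E b) = wj * E (D b) - c1 * wj * E b"
    using der_basic(3)[OF D, of wj "E b"] Dw DE[of b] by (simp add: algebra_simps)
  have 2: "E (vi * D b) = vi * E (D b) + c2 * vi * D b"
    using der_basic(3)[OF E, of vi "D b"] Ev by (simp add: algebra_simps)
  show ?thesis unfolding der_br_def 1 2 by (simp add: algebra_simps)
qed

theorem theorem3p5:
  fixes r :: nat and N :: "nat \<Rightarrow> nat \<Rightarrow> int"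
    and \<alpha> :: "nat \<Rightarrow> nat \<Rightarrow> complex"
    and \<iota> :: "complex \<Rightarrow> 'a::comm_ring_1"
    and FH :: "nat \<Rightarrow> 'a \<Rightarrow> 'a"
    and v vinv :: "nat \<Rightarrow> 'a"
    and dp dm :: "nat \<Rightarrow> 'a \<Rightarrow> 'a"
  defines "m \<equiv> r + corank r N"
  defines "A \<equiv> (\<lambda>i j. lform_Im \<iota> m FH (\<alpha> i) (dp j))"
  defines "A' \<equiv> (\<lambda>i j. A i j / A j j)"
  assumes gcm: "gcm r N"
    and alpha_N: "\<forall>i\<in>{1..r}. \<forall>j\<in>{1..r}. \<alpha> j i = of_int (N i j)"
    and alpha_indep: "lin_indep_on {1..r} {1..m} \<alpha>"
    and iota: "cplx_alg_hom \<iota>"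
    and F_der: "\<forall>k\<in>{1..m}. is_der \<iota> (FH k)"
    and F_comm: "\<forall>k\<in>{1..m}. \<forall>l\<in>{1..m}. der_br (FH k) (FH l) = (\<lambda>b. 0)"
    and v_inv: "\<forall>i\<in>{1..r}. v i * vinv i = 1"
    and v_eig: "\<forall>i\<in>{1..r}. \<forall>k\<in>{1..m}. FH k (v i) = \<iota> (\<alpha> i k) * v i"
    and dp_Im: "\<forall>i\<in>{1..r}. dp i \<in> ImF \<iota> m FH"
    and dm_Im: "\<forall>i\<in>{1..r}. dm i \<in> ImF \<iota> m FH"
    and br_ii: "\<forall>i\<in>{1..r}. der_br (\<lambda>b. v i * dp i b) (\<lambda>b. vinv i * dm i b) = FH i"
    and br_ij: "\<forall>i\<in>{1..r}. \<forall>j\<in>{1..r}. i \<noteq> j \<longrightarrow>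
                  der_br (\<lambda>b. v i * dp i b) (\<lambda>b. vinv j * dm j b) = (\<lambda>b. 0)"
  shows "(\<forall>i\<in>{1..r}. A i i \<noteq> 0)
    \<and> (\<forall>i\<in>{1..r}. dm i = (\<lambda>b. \<iota> (1 / A i i) * (- FH i b + \<iota> (1 / A i i) * dp i b)))
    \<and> (\<forall>i\<in>{1..r}. \<forall>j\<in>{1..r}. i \<noteq> j \<longrightarrow> A' i j \<in> {0, -1})
    \<and> (\<forall>i\<in>{1..r}. \<forall>j\<in>{1..r}. A' i j + A' j i = of_int (N j i))
    \<and> (\<forall>i\<in>{1..r}. \<forall>j\<in>{1..r}. A' i j = -1 \<longrightarrow>
          (\<forall>k\<in>{1..r}. k \<noteq> j \<longrightarrow> A' i k \<noteq> -1) \<and> (\<forall>k\<in>{1..r}. k \<noteq> i \<longrightarrow> A' k j \<noteq> -1))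
    \<and> (\<forall>i\<in>{1..r}. \<forall>j\<in>{1..r}. A' i j = -1 \<and> A' j i = -1 \<longrightarrow>
          N i j = -2 \<and> N j i = -2 \<and>
          (\<forall>k\<in>{1..r} - {i, j}. N i k = 0 \<and> N k i = 0 \<and> N j k = 0 \<and> N k j = 0) \<and>
          (\<forall>b. FH i b + FH j b = 0))"
proof -
  have rm: "\<And>i. i \<in> {1..r} \<Longrightarrow> i \<in> {1..m}" unfolding m_def by auto
  define B where "B = (\<lambda>k j. lform_Im \<iota> m FH (\<alpha> k) (dm j))"
  have eigv: "\<And>k. k \<in> {1..r} \<Longrightarrow> \<forall>l\<in>{1..m}. FH l (v k) = \<iota> (\<alpha> k l) * v k"
    using v_eig by blast
  have dpI: "\<And>j. j \<in> {1..r} \<Longrightarrow> dp j \<in> ImF \<iota> m FH" using dp_Im by blast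
  have dmI: "\<And>j. j \<in> {1..r} \<Longrightarrow> dm j \<in> ImF \<iota> m FH" using dm_Im by blast
  have dpv: "\<And>j k. j \<in> {1..r} \<Longrightarrow> k \<in> {1..r} \<Longrightarrow> dp j (v k) = \<iota> (A k j) * v k"
    unfolding A_def by (rule ImF_eig[OF iota F_der eigv dpI])
  have dmv: "\<And>j k. j \<in> {1..r} \<Longrightarrow> k \<in> {1..r} \<Longrightarrow> dm j (v k) = \<iota> (B k j) * v k"
    unfolding B_def by (rule ImF_eig[OF iota F_der eigv dmI])
  have Dp: "\<And>j. j \<in> {1..r} \<Longrightarrow> is_der \<iota> (dp j)" by (rule ImF_der[OF iota F_der dpI])
  have Dm: "\<And>j. j \<in> {1..r} \<Longrightarrow> is_der \<iota> (dm j)" by (rule ImF_der[OF iota F_der dmI])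
  have comm: "\<And>i j b. i \<in> {1..r} \<Longrightarrow> j \<in> {1..r} \<Longrightarrow> dp i (dm j b) = dm j (dp i b)"
    by (rule ImF_comm[OF iota F_der F_comm dpI dmI])
  have vv: "\<And>k. k \<in> {1..r} \<Longrightarrow> v k * vinv k = 1" using v_inv by blast
  have cancel: "\<And>k x y. k \<in> {1..r} \<Longrightarrow> x * v k = y * v k \<Longrightarrow> x = y"
  proof -
    fix k x y assume k: "k \<in> {1..r}" and e: "x * v k = y * v k"
    have "x = x * v k * vinv k" using vv[OF k] by (simp add: mult.assoc)
    also have "\<dots> = y * v k * vinv k" using e by simp
    also have "\<dots> = y" using vv[OF k] by (simp add: mult.assoc)
    finally show "x = y" .
  qed
  note ih = iota_basic[OF iota]
  have br1: "\<And>i b. i \<in> {1..r} \<Longrightarrow> FH i b = - (\<iota> (A i i) * dm i b) - \<iota> (B i i) * dp i b"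
  proof -
    fix i b assume i: "i \<in> {1..r}"
    have "der_br (\<lambda>b. v i * dp i b) (\<lambda>b. vinv i * dm i b) b
        = v i * vinv i * (- (\<iota> (A i i) * dm i b) - \<iota> (B i i) * dp i b)"
      by (rule bracket[OF Dp[OF i] Dm[OF i] comm[OF i i] vv[OF i] dpv[OF i i] dmv[OF i i]])
    then show "FH i b = - (\<iota> (A i i) * dm i b) - \<iota> (B i i) * dp i b"
      using br_ii i vv[OF i] by simp
  qed
  have br2: "\<And>i j b. i \<in> {1..r} \<Longrightarrow> j \<in> {1..r} \<Longrightarrow> i \<noteq> j \<Longrightarrow>
      \<iota> (A j i) * dm j b + \<iota> (B i j) * dp i b = 0"
  proof -
    fix i j b assume i: "i \<in> {1..r}" and j: "j \<in> {1..r}" and ij: "i \<noteq> j"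
    have "der_br (\<lambda>b. v i * dp i b) (\<lambda>b. vinv j * dm j b) b
        = v i * vinv j * (- (\<iota> (A j i) * dm j b) - \<iota> (B i j) * dp i b)"
      by (rule bracket[OF Dp[OF i] Dm[OF j] comm[OF i j] vv[OF j] dpv[OF i j] dmv[OF j i]])
    then have z: "v i * vinv j * (- (\<iota> (A j i) * dm j b) - \<iota> (B i j) * dp i b) = 0"
      using br_ij i j ij by (metis (no_types, lifting))
    have "- (\<iota> (A j i) * dm j b) - \<iota> (B i j) * dp i b
       = (v i * vinv i) * (v j * vinv j) * (- (\<iota> (A j i) * dm j b) - \<iota> (B i j) * dp i b)"
      using vv[OF i] vv[OF j] by simp
    also have "\<dots> = (vinv i * v j) * (v i * vinv j * (- (\<iota> (A j i) * dm j b) - \<iota> (B i j) * dp i b))"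
      by (simp add: mult_ac)
    also have "\<dots> = 0" using z by simp
    finally have fin: "- (\<iota> (A j i) * dm j b) - \<iota> (B i j) * dp i b = 0" .
    have "\<iota> (A j i) * dm j b + \<iota> (B i j) * dp i b = - (- (\<iota> (A j i) * dm j b) - \<iota> (B i j) * dp i b)"
      by (simp add: algebra_simps)
    then show "\<iota> (A j i) * dm j b + \<iota> (B i j) * dp i b = 0" using fin by simp
  qed
  have sI: "\<And>i k. i \<in> {1..r} \<Longrightarrow> k \<in> {1..r} \<Longrightarrow>
      of_int (N i k) = - A i i * B k i - B i i * A k i"
  proof -
    fix i k assume i: "i \<in> {1..r}" and k: "k \<in> {1..r}"
    have "\<iota> (of_int (N i k)) * v k = FH i (v k)"
      using eigv[OF k] rm[OF i] alpha_N i k by simp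
    also have "\<dots> = \<iota> (- A i i * B k i - B i i * A k i) * v k"
      unfolding br1[OF i] dpv[OF i k] dmv[OF i k] by (simp add: ih algebra_simps)
    finally show "of_int (N i k) = - A i i * B k i - B i i * A k i"
      using cancel[OF k] iota_inj[OF iota] by blast
  qed
  have sII: "\<And>i j k. i \<in> {1..r} \<Longrightarrow> j \<in> {1..r} \<Longrightarrow> k \<in> {1..r} \<Longrightarrow> i \<noteq> j \<Longrightarrow>
      A j i * B k j + B i j * A k i = 0"
  proof -
    fix i j k assume i: "i \<in> {1..r}" and j: "j \<in> {1..r}" and k: "k \<in> {1..r}" and ij: "i \<noteq> j"
    have "\<iota> (A j i * B k j + B i j * A k i) * v k = \<iota> 0 * v k"
      using br2[OF i j ij, of "v k"] unfolding dpv[OF i k] dmv[OF j k]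
      by (simp add: ih algebra_simps)
    then show "A j i * B k j + B i j * A k i = 0"
      using cancel[OF k] iota_inj[OF iota] by blast
  qed
  have N2: "\<And>i. i \<in> {1..r} \<Longrightarrow> N i i = 2" using gcm unfolding gcm_def by blast
  have AB: "\<And>i. i \<in> {1..r} \<Longrightarrow> A i i * B i i = -1"
  proof -
    fix i assume i: "i \<in> {1..r}"
    have "(2::complex) = - 2 * (A i i * B i i)" using sI[OF i i] N2[OF i] by (simp add: algebra_simps)
    then have "-2 * (A i i * B i i) = -2 * (-1::complex)" by simp
    then show "A i i * B i i = -1" by (simp only: mult_cancel_left) simp
  qed
  have Ane: "\<And>i. i \<in> {1..r} \<Longrightarrow> A i i \<noteq> 0" using AB by force
  have Bii: "\<And>i. i \<in> {1..r} \<Longrightarrow> B i i = - 1 / A i i"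
    using AB Ane by (simp add: field_simps)
  have Bf: "\<And>j k. j \<in> {1..r} \<Longrightarrow> k \<in> {1..r} \<Longrightarrow> B k j = (A' k j - of_int (N j k)) / A j j"
  proof -
    fix j k assume j: "j \<in> {1..r}" and k: "k \<in> {1..r}"
    show "B k j = (A' k j - of_int (N j k)) / A j j"
      using sI[OF j k] Bii[OF j] Ane[OF j] unfolding A'_def by (simp add: field_simps)
  qed
  have Pd0: "\<forall>i\<in>{1..r}. A' i i = 1" using Ane unfolding A'_def by simp
  have S0: "\<forall>i\<in>{1..r}. \<forall>j\<in>{1..r}. \<forall>k\<in>{1..r}. i\<noteq>j \<longrightarrow>
      A' j i * (A' k j - of_int (N j k)) + (A' i j - of_int (N j i)) * A' k i = 0"
  proof (intro ballI impI)
    fix i j k assume i: "i \<in> {1..r}" and j: "j \<in> {1..r}" and k: "k \<in> {1..r}" and ij: "i \<noteq> j"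
    have "A' j i * (A' k j - of_int (N j k)) + (A' i j - of_int (N j i)) * A' k i
        = (A j j / A i i) * (A j i * B k j + B i j * A k i)"
      unfolding Bf[OF j k] Bf[OF j i] using Ane[OF i] Ane[OF j]
      by (simp add: A'_def field_simps)
    then show "A' j i * (A' k j - of_int (N j k)) + (A' i j - of_int (N j i)) * A' k i = 0"
      using sII[OF i j k ij] by simp
  qed
  note SM = scalar_main[OF gcm Pd0 S0]
  have uu: "\<And>i. i \<in> {1..r} \<Longrightarrow> \<iota> (A i i) * \<iota> (1 / A i i) = 1"
  proof -
    fix i assume i: "i \<in> {1..r}"
    have "\<iota> (A i i) * \<iota> (1 / A i i) = \<iota> (A i i * (1 / A i i))" by (rule ih(3)[symmetric])
    also have "\<dots> = 1" using Ane[OF i] ih by simp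
    finally show "\<iota> (A i i) * \<iota> (1 / A i i) = 1" .
  qed
  have c2: "\<forall>i\<in>{1..r}. dm i = (\<lambda>b. \<iota> (1 / A i i) * (- FH i b + \<iota> (1 / A i i) * dp i b))"
  proof (intro ballI ext)
    fix i b assume i: "i \<in> {1..r}"
    have "B i i = - (1 / A i i)" using Bii[OF i] by simp
    then have w: "\<iota> (B i i) = - \<iota> (1 / A i i)" using ih(5) by metis
    have "\<iota> (1 / A i i) * (- FH i b + \<iota> (1 / A i i) * dp i b)
       = (\<iota> (A i i) * \<iota> (1 / A i i)) * dm i b + \<iota> (1 / A i i) * (\<iota> (B i i) + \<iota> (1 / A i i)) * dp i b"
      unfolding br1[OF i] by (simp add: algebra_simps)
    also have "\<dots> = dm i b" using uu[OF i] w by simp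
    finally show "dm i b = \<iota> (1 / A i i) * (- FH i b + \<iota> (1 / A i i) * dp i b)" by simp
  qed
  have half: "\<And>i j b. i \<in> {1..r} \<Longrightarrow> j \<in> {1..r} \<Longrightarrow> i \<noteq> j \<Longrightarrow> A' i j = -1 \<Longrightarrow> A' j i = -1 \<Longrightarrow>
      FH j b - \<iota> (1 / A j j) * dp j b + \<iota> (1 / A i i) * dp i b = 0"
  proof -
    fix i j b assume i: "i \<in> {1..r}" and j: "j \<in> {1..r}" and ij: "i \<noteq> j"
      and m1: "A' i j = -1" and m2: "A' j i = -1"
    have Nji: "N j i = -2" using SM i j m1 m2 by blast
    have Aji: "A j i = - A i i" using m2 Ane[OF i] unfolding A'_def by (simp add: field_simps)
    have Bij: "B i j = 1 / A j j" using Bf[OF j i] m1 Nji by simp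
    have e: "\<iota> (A j i) * dm j b + \<iota> (B i j) * dp i b = 0" by (rule br2[OF i j ij])
    have e2: "- \<iota> (A i i) * (\<iota> (1 / A j j) * (- FH j b + \<iota> (1 / A j j) * dp j b)) + \<iota> (1 / A j j) * dp i b = 0"
      using e unfolding Aji Bij c2[rule_format, OF j] by (simp add: ih)
    define u u' w w' X P Q where "u = \<iota> (A i i)" "u' = \<iota> (1 / A i i)" "w = \<iota> (A j j)" "w' = \<iota> (1 / A j j)"
      "X = FH j b" "P = dp j b" "Q = dp i b"
    have "(w*u') * (-u*(w'*(-X + w'*P)) + w'*Q) = (u*u')*(w*w')*X - (u*u')*(w*w')*(w'*P) + (w*w')*(u'*Q)"
      by (simp add: algebra_simps)
    moreover have "u*u' = 1" "w*w' = 1" unfolding u_u'_w_w'_X_P_Q_def using uu[OF i] uu[OF j] by auto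
    moreover have "-u*(w'*(-X + w'*P)) + w'*Q = 0" unfolding u_u'_w_w'_X_P_Q_def using e2 by simp
    ultimately have "X - w'*P + u'*Q = 0" by simp
    then show "FH j b - \<iota> (1 / A j j) * dp j b + \<iota> (1 / A i i) * dp i b = 0"
      unfolding u_u'_w_w'_X_P_Q_def .
  qed
  have c6F: "\<forall>i\<in>{1..r}. \<forall>j\<in>{1..r}. A' i j = -1 \<and> A' j i = -1 \<longrightarrow> (\<forall>b. FH i b + FH j b = 0)"
  proof (intro ballI impI allI)
    fix i j b assume i: "i \<in> {1..r}" and j: "j \<in> {1..r}" and m: "A' i j = -1 \<and> A' j i = -1"
    then have ij: "i \<noteq> j" using Pd0 by auto
    have h1: "FH j b - \<iota> (1 / A j j) * dp j b + \<iota> (1 / A i i) * dp i b = 0"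
      using half[OF i j ij] m by blast
    have h2: "FH i b - \<iota> (1 / A i i) * dp i b + \<iota> (1 / A j j) * dp j b = 0"
      using half[OF j i ij[symmetric]] m by blast
    have "FH i b + FH j b = (FH j b - \<iota> (1 / A j j) * dp j b + \<iota> (1 / A i i) * dp i b)
        + (FH i b - \<iota> (1 / A i i) * dp i b + \<iota> (1 / A j j) * dp j b)"
      by (simp add: algebra_simps)
    then show "FH i b + FH j b = 0" using h1 h2 by simp
  qed
  have c1: "\<forall>i\<in>{1..r}. A i i \<noteq> 0" using Ane by blast
  have s3: "\<forall>i\<in>{1..r}. \<forall>j\<in>{1..r}. i \<noteq> j \<longrightarrow> A' i j \<in> {0, -1}"
    using SM by (rule conjunct1)
  have s4: "\<forall>i\<in>{1..r}. \<forall>j\<in>{1..r}. A' i j + A' j i = of_int (N j i)"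
    using SM by (elim conjE)
  have s5: "\<forall>i\<in>{1..r}. \<forall>j\<in>{1..r}. A' i j = -1 \<longrightarrow>
          (\<forall>k\<in>{1..r}. k \<noteq> j \<longrightarrow> A' i k \<noteq> -1) \<and> (\<forall>k\<in>{1..r}. k \<noteq> i \<longrightarrow> A' k j \<noteq> -1)"
    using SM by (elim conjE)
  have s6: "\<forall>i\<in>{1..r}. \<forall>j\<in>{1..r}. A' i j = -1 \<and> A' j i = -1 \<longrightarrow>
          N i j = -2 \<and> N j i = -2 \<and>
          (\<forall>k\<in>{1..r} - {i, j}. N i k = 0 \<and> N k i = 0 \<and> N j k = 0 \<and> N k j = 0)"
    using SM by (elim conjE)
  have c6: "\<forall>i\<in>{1..r}. \<forall>j\<in>{1..r}. A' i j = -1 \<and> A' j i = -1 \<longrightarrow>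
          N i j = -2 \<and> N j i = -2 \<and>
          (\<forall>k\<in>{1..r} - {i, j}. N i k = 0 \<and> N k i = 0 \<and> N j k = 0 \<and> N k j = 0) \<and>
          (\<forall>b. FH i b + FH j b = 0)"
  proof (intro ballI impI)
    fix i j assume i: "i \<in> {1..r}" and j: "j \<in> {1..r}" and m: "A' i j = -1 \<and> A' j i = -1"
    have x: "N i j = -2 \<and> N j i = -2 \<and>
          (\<forall>k\<in>{1..r} - {i, j}. N i k = 0 \<and> N k i = 0 \<and> N j k = 0 \<and> N k j = 0)"
      using s6 i j m by blast
    have y: "\<forall>b. FH i b + FH j b = 0" using c6F i j m by blast
    show "N i j = -2 \<and> N j i = -2 \<and>
          (\<forall>k\<in>{1..r} - {i, j}. N i k = 0 \<and> N k i = 0 \<and> N j k = 0 \<and> N k j = 0) \<and>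
          (\<forall>b. FH i b + FH j b = 0)" using x y by (intro conjI) (elim conjE, assumption)+
  qed
  show ?thesis
    apply (intro conjI)
    apply (rule c1)
    apply (rule c2)
    apply (rule s3)
    apply (rule s4)
    apply (rule s5)
    apply (rule c6)
    done
qed

end
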